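(* Fix $d\ge 2$ and for $d\times d$ density matrices $\rho,\sigma$ let $$\mathcal{F}_C(\rho,\sigma)=\frac{1-r}{2}+\frac{1+r}{2}\left[\operatorname{tr}(\rho\sigma)+\sqrt{1-\operatorname{tr}(\rho^2)}\sqrt{1-\operatorname{tr}(\sigma^2)}\right],\qquad r=\frac{1}{d-1}.$$ Then $\sqrt{1-\mathcal{F}_C(\rho,\sigma)}$ is a metric on the set of $d\times d$ density matrices.
   Context: A density matrix is a positive semidefinite complex matrix of unit trace. A metric is a function that is nonnegative, vanishes exactly on equal arguments, is symmetric, and satisfies the triangle inequality. *)

theory Defs
  imports "HOL-Analysis.Analysis"
begin

text \<open>Complex d x d matrices are modelled as complex^'n^'n, with d = CARD('n).\<close>

definition hermitian_mat :: "complex^'n^'n \<Rightarrow> bool" where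
  "hermitian_mat A \<longleftrightarrow> (\<forall>i j. A $ i $ j = cnj (A $ j $ i))"

definition quad_form :: "complex^'n^'n \<Rightarrow> complex^'n \<Rightarrow> complex" where
  "quad_form A x = (\<Sum>i\<in>UNIV. \<Sum>j\<in>UNIV. cnj (x $ i) * A $ i $ j * x $ j)"

definition psd_mat :: "complex^'n^'n \<Rightarrow> bool" where
  "psd_mat A \<longleftrightarrow> hermitian_mat A \<and>
     (\<forall>x. Im (quad_form A x) = 0 \<and> 0 \<le> Re (quad_form A x))"

definition mat_trace :: "complex^'n^'n \<Rightarrow> complex" where
  "mat_trace A = (\<Sum>i\<in>UNIV. A $ i $ i)"

definition density_matrix :: "complex^'n^'n \<Rightarrow> bool" where
  "density_matrix \<rho> \<longleftrightarrow> psd_mat \<rho> \<and> mat_trace \<rho> = 1"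

text \<open>The quantity F_C; traces of products of density matrices are real, so we take Re.\<close>
definition F_C :: "complex^'n^'n \<Rightarrow> complex^'n^'n \<Rightarrow> real" where
  "F_C \<rho> \<sigma> =
     (let r = 1 / (real CARD('n) - 1) in
      (1 - r) / 2 + (1 + r) / 2 *
        (Re (mat_trace (\<rho> ** \<sigma>))
         + sqrt (1 - Re (mat_trace (\<rho> ** \<rho>))) * sqrt (1 - Re (mat_trace (\<sigma> ** \<sigma>)))))"

definition metric_on :: "'a set \<Rightarrow> ('a \<Rightarrow> 'a \<Rightarrow> real) \<Rightarrow> bool" where
  "metric_on S dist_fn \<longleftrightarrow>
     (\<forall>x\<in>S. \<forall>y\<in>S. 0 \<le> dist_fn x y) \<and>
     (\<forall>x\<in>S. \<forall>y\<in>S. dist_fn x y = 0 \<longleftrightarrow> x = y) \<and>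
     (\<forall>x\<in>S. \<forall>y\<in>S. dist_fn x y = dist_fn y x) \<and>
     (\<forall>x\<in>S. \<forall>y\<in>S. \<forall>z\<in>S. dist_fn x z \<le> dist_fn x y + dist_fn y z)"

end

theory Submission
  imports Defs
begin

lemma sum_two_if:
  fixes g :: "'n::finite \<Rightarrow> complex"
  assumes "i \<noteq> j"
  shows "(\<Sum>l\<in>UNIV. g l * (if l = i then a else if l = j then b else 0)) = g i * a + g j * b"
proof -
  have "(\<Sum>l\<in>UNIV. g l * (if l = i then a else if l = j then b else 0))
      = (\<Sum>l\<in>UNIV. (if l = i then g i * a else 0) + (if l = j then g j * b else 0))"
    by (rule sum.cong) (use assms in auto)
  also have "\<dots> = g i * a + g j * b" by (simp add: sum.distrib)
  finally show ?thesis .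
qed

lemma sum_two_if':
  fixes g :: "'n::finite \<Rightarrow> complex"
  assumes "i \<noteq> j"
  shows "(\<Sum>l\<in>UNIV. (if l = i then a else if l = j then b else 0) * g l) = a * g i + b * g j"
  using sum_two_if[OF assms, of g a b] by (simp add: mult.commute)

lemma quad_two:
  fixes A :: "complex^'n^'n"
  assumes "i \<noteq> j"
  shows "quad_form A (\<chi> k. if k = i then 1 else if k = j then c else 0)
       = A$i$i + A$i$j * c + cnj c * A$j$i + cnj c * A$j$j * c"
proof -
  have "quad_form A (\<chi> k. if k = i then 1 else if k = j then c else 0)
     = (\<Sum>k\<in>UNIV. (if k = i then 1 else if k = j then cnj c else 0) *
          (\<Sum>l\<in>UNIV. A$k$l * (if l = i then 1 else if l = j then c else 0)))"
    unfolding quad_form_def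
    by (rule sum.cong) (auto simp: sum_distrib_left mult.assoc)
  also have "\<dots> = (\<Sum>k\<in>UNIV. (if k = i then 1 else if k = j then cnj c else 0) *
          (A$k$i + A$k$j * c))"
    by (rule sum.cong[OF refl]) (subst sum_two_if[OF assms], simp)
  also have "\<dots> = (A$i$i + A$i$j * c) + cnj c * (A$j$i + A$j$j * c)"
    by (subst sum_two_if'[OF assms]) simp
  finally show ?thesis by (simp add: algebra_simps)
qed

lemma herm_diag: "hermitian_mat A \<Longrightarrow> Im (A$i$i) = 0"
  unfolding hermitian_mat_def by (metis complex_cnj_cancel_iff complex_eq_cancel_iff2 cnj.sel(2) neg_equal_zero)

lemma psd_diag: "psd_mat A \<Longrightarrow> 0 \<le> Re (A$i$i)"
proof -
  assume "psd_mat A"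
  then have "0 \<le> Re (quad_form A (\<chi> k. if k = i then 1 else 0))"
    unfolding psd_mat_def by blast
  moreover have "quad_form A (\<chi> k. if k = i then 1 else 0) = A$i$i"
  proof -
    have e: "(\<lambda>l. A $ k $ l * (if l = i then 1 else 0)) = (\<lambda>l. if l = i then A $ k $ i else 0)" for k
      by auto
    have e2: "(\<lambda>k. cnj (if k = i then 1 else 0) * (\<Sum>l\<in>UNIV. A $ k $ l * (if l = i then 1 else 0)))
        = (\<lambda>k. if k = i then A $ i $ i else 0)"
      unfolding e by auto
    show ?thesis unfolding quad_form_def sum_distrib_left[symmetric] mult.assoc
      by (simp only: vec_lambda_beta e2) simp
  qed
  ultimately show ?thesis by simp
qed

lemma quad_lemma:
  fixes a b m :: real
  assumes "\<And>t. 0 \<le> a - 2*t*m + t^2*m*b" "m \<ge> 0" "a \<ge> 0" "b \<ge> 0"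
  shows "m \<le> a * b"
proof (cases "m = 0")
  case True then show ?thesis using assms by simp
next
  case False
  then have m: "m > 0" using assms by simp
  show ?thesis
  proof (cases "b = 0")
    case True
    have "0 \<le> a - 2*((a+1)/(2*m))*m + ((a+1)/(2*m))^2*m*b" by (rule assms(1))
    with True m show ?thesis by (simp add: field_simps)
  next
    case False
    then have b: "b > 0" using assms by simp
    have "0 \<le> a - 2*(1/b)*m + (1/b)^2*m*b" by (rule assms(1))
    then have "0 \<le> a - m/b" using b by (simp add: field_simps power2_eq_square)
    then show ?thesis using b by (simp add: field_simps)
  qed
qed

lemma entry_bound:
  fixes A :: "complex^'n^'n"
  assumes "psd_mat A"
  shows "(cmod (A$i$j))^2 \<le> Re (A$i$i) * Re (A$j$j)"
proof (cases "i = j")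
  case True
  have "Im (A$i$i) = 0" using assms herm_diag unfolding psd_mat_def by blast
  then have "cmod (A$i$i) = \<bar>Re (A$i$i)\<bar>" by (simp add: cmod_def)
  then show ?thesis using True by (simp add: power2_eq_square)
next
  case False
  have h: "hermitian_mat A" using assms unfolding psd_mat_def by blast
  have ji: "A$j$i = cnj (A$i$j)" using h unfolding hermitian_mat_def by blast
  have dj: "A$j$j = complex_of_real (Re (A$j$j))" using herm_diag[OF h, of j] by (simp add: complex_eq_iff)
  have di: "A$i$i = complex_of_real (Re (A$i$i))" using herm_diag[OF h, of i] by (simp add: complex_eq_iff)
  define m where "m = (cmod (A$i$j))^2"
  have mm: "A$i$j * cnj (A$i$j) = complex_of_real m"
    unfolding m_def by (rule complex_norm_square[symmetric])
  have "0 \<le> Re (A$i$i) - 2*t*m + t^2*m*Re (A$j$j)" for t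
  proof -
    let ?c = "- complex_of_real t * cnj (A$i$j)"
    have "0 \<le> Re (quad_form A (\<chi> k. if k = i then 1 else if k = j then ?c else 0))"
      using assms unfolding psd_mat_def by blast
    also have "quad_form A (\<chi> k. if k = i then 1 else if k = j then ?c else 0)
       = A$i$i + A$i$j * ?c + cnj ?c * A$j$i + cnj ?c * A$j$j * ?c"
      by (rule quad_two[OF False])
    also have "\<dots> = A$i$i - 2 * complex_of_real t * (A$i$j * cnj (A$i$j))
        + (complex_of_real t)^2 * (A$i$j * cnj (A$i$j)) * A$j$j"
      unfolding ji by (simp add: algebra_simps power2_eq_square)
    also have "\<dots> = complex_of_real (Re (A$i$i) - 2*t*m + t^2*m*Re (A$j$j))"
      unfolding mm by (subst di, subst dj) simp
    finally show ?thesis by simp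
  qed
  then have "m \<le> Re (A$i$i) * Re (A$j$j)"
    by (rule quad_lemma) (auto simp: m_def psd_diag[OF assms])
  then show ?thesis unfolding m_def .
qed

lemma trace_inner:
  fixes A B :: "complex^'n^'n"
  assumes "hermitian_mat B"
  shows "Re (mat_trace (A ** B)) = inner A B"
proof -
  have "Re (mat_trace (A ** B)) = (\<Sum>i\<in>UNIV. \<Sum>k\<in>UNIV. Re (A$i$k * B$k$i))"
    unfolding mat_trace_def matrix_matrix_mult_def by (simp only: vec_lambda_beta Re_sum)
  also have "\<dots> = (\<Sum>i\<in>UNIV. \<Sum>k\<in>UNIV. inner (A$i$k) (B$i$k))"
  proof -
    have hb: "B$k$i = cnj (B$i$k)" for i k using assms unfolding hermitian_mat_def by blast
    have e: "Re (A$i$k * B$k$i) = inner (A$i$k) (B$i$k)" for i k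
      unfolding hb[of k i] by (simp add: inner_complex_def)
    show ?thesis by (simp only: e)
  qed
  also have "\<dots> = inner A B" by (simp add: inner_vec_def)
  finally show ?thesis .
qed

lemma inner_self_le1:
  fixes A :: "complex^'n^'n"
  assumes "density_matrix A"
  shows "inner A A \<le> 1"
proof -
  have p: "psd_mat A" using assms unfolding density_matrix_def by blast
  have "inner A A = (\<Sum>i\<in>UNIV. \<Sum>j\<in>UNIV. (cmod (A$i$j))^2)"
    by (simp add: inner_vec_def power2_norm_eq_inner)
  also have "\<dots> \<le> (\<Sum>i\<in>UNIV. \<Sum>j\<in>UNIV. Re (A$i$i) * Re (A$j$j))"
    by (intro sum_mono entry_bound[OF p])
  also have "\<dots> = (\<Sum>i\<in>UNIV. Re (A$i$i)) * (\<Sum>j\<in>UNIV. Re (A$j$j))"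
    by (simp add: sum_product)
  also have "(\<Sum>i\<in>UNIV. Re (A$i$i)) = Re (mat_trace A)"
    by (simp add: mat_trace_def Re_sum)
  also have "\<dots> = 1" using assms unfolding density_matrix_def by simp
  finally show ?thesis by simp
qed

definition emb :: "complex^'n^'n \<Rightarrow> (complex^'n^'n) \<times> real" where
  "emb A = (A, sqrt (1 - inner A A))"

lemma key:
  fixes A B :: "complex^'n^'n"
  assumes "density_matrix A" "density_matrix B"
  shows "1 - F_C A B = (1 + 1 / (real CARD('n) - 1)) / 4 * (dist (emb A) (emb B))^2"
proof -
  have hA: "hermitian_mat A" and hB: "hermitian_mat B"
    using assms unfolding density_matrix_def psd_mat_def by auto
  have a1: "inner A A \<le> 1" and b1: "inner B B \<le> 1" using inner_self_le1 assms by auto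
  have nA: "inner (emb A) (emb A) = 1" using a1 by (simp add: emb_def inner_prod_def)
  have nB: "inner (emb B) (emb B) = 1" using b1 by (simp add: emb_def inner_prod_def)
  define P where "P = inner (emb A) (emb B)"
  have FP: "F_C A B = (1 - 1 / (real CARD('n) - 1)) / 2 + (1 + 1 / (real CARD('n) - 1)) / 2 * P"
    unfolding F_C_def P_def Let_def emb_def
    by (simp add: trace_inner hA hB inner_prod_def)
  have "(dist (emb A) (emb B))^2 = inner (emb A - emb B) (emb A - emb B)"
    by (simp add: dist_norm power2_norm_eq_inner)
  also have "\<dots> = 2 - 2 * P"
    using nA nB unfolding P_def by (simp add: inner_diff_left inner_diff_right inner_commute)
  finally have d2: "(dist (emb A) (emb B))^2 = 2 - 2 * P" .
  have gen: "1 - ((1 - r) / 2 + (1 + r) / 2 * P) = (1 + r) / 4 * (2 - 2 * P)" for r :: real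
    by (simp add: field_simps)
  show ?thesis unfolding FP d2 by (rule gen)
qed

theorem theorem10:
  assumes "CARD('n) \<ge> 2"
  shows "metric_on {\<rho> :: complex^'n^'n. density_matrix \<rho>} (\<lambda>\<rho> \<sigma>. sqrt (1 - F_C \<rho> \<sigma>))"
proof -
  define k where "k = sqrt ((1 + 1 / (real CARD('n) - 1)) / 4)"
  have kpos: "k > 0" unfolding k_def using assms by (simp add: field_simps)
  have D: "sqrt (1 - F_C A B) = k * dist (emb A) (emb B)"
    if "density_matrix A" "density_matrix B" for A B :: "complex^'n^'n"
    unfolding key[OF that] k_def by (simp only: real_sqrt_mult real_sqrt_abs) simp
  have inj: "emb A = emb B \<longleftrightarrow> A = B" for A B :: "complex^'n^'n"
    by (auto simp: emb_def)
  show ?thesis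
    unfolding metric_on_def
  proof (intro conjI ballI)
    fix x y :: "complex^'n^'n" assume "x \<in> {\<rho>. density_matrix \<rho>}" "y \<in> {\<rho>. density_matrix \<rho>}"
    then have x: "density_matrix x" and y: "density_matrix y" by auto
    show "0 \<le> sqrt (1 - F_C x y)" using D[OF x y] kpos by simp
    show "(sqrt (1 - F_C x y) = 0) = (x = y)" using D[OF x y] kpos inj by simp
    show "sqrt (1 - F_C x y) = sqrt (1 - F_C y x)" using D[OF x y] D[OF y x] by (simp add: dist_commute)
  next
    fix x y z :: "complex^'n^'n" assume "x \<in> {\<rho>. density_matrix \<rho>}" "y \<in> {\<rho>. density_matrix \<rho>}"
      "z \<in> {\<rho>. density_matrix \<rho>}"
    then have x: "density_matrix x" and y: "density_matrix y" and z: "density_matrix z" by auto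
    have "dist (emb x) (emb z) \<le> dist (emb x) (emb y) + dist (emb y) (emb z)"
      by (rule dist_triangle)
    then have "k * dist (emb x) (emb z) \<le> k * dist (emb x) (emb y) + k * dist (emb y) (emb z)"
      using kpos by (simp add: distrib_left[symmetric])
    then show "sqrt (1 - F_C x z) \<le> sqrt (1 - F_C x y) + sqrt (1 - F_C y z)"
      using D[OF x z] D[OF x y] D[OF y z] by simp
  qed
qed

end
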